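(* Let $p\in\mathcal H(2,d)$ and suppose $p(x,y)=a(x)+y\,b(x)$ for polynomials $a,b$ in one variable. Then $N(p)\ge d+1$; the monomial $x^d$ occurs in $p$, and for each $j$ with $0\le j\le d-1$ the monomial $x^jy$ occurs in $p$. Moreover $N(p)=d+1$ if and only if $p(x,y)=x^d+y(x^{d-1}+\cdots+x+1)$.
   Context: $\mathcal H(2,d)$ is the set of real polynomials in $(x,y)$ of total degree exactly $d$, with all coefficients nonnegative, such that $p(x,y)=1$ whenever $x+y=1$. $N(p)$ denotes the number of distinct monomials occurring with nonzero coefficient in $p$. *)

theory Defs
  imports Main "HOL.Real"
begin

text \<open>A real polynomial in two variables (x,y) is represented by its coefficient
function c :: nat \<times> nat \<Rightarrow> real with finite support; c (i,j) is the
coefficient of the monomial x^i y^j.\<close>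

definition bsupp :: "(nat \<times> nat \<Rightarrow> real) \<Rightarrow> (nat \<times> nat) set" where
  "bsupp c = {m. c m \<noteq> 0}"

definition is_bipoly :: "(nat \<times> nat \<Rightarrow> real) \<Rightarrow> bool" where
  "is_bipoly c \<longleftrightarrow> finite (bsupp c)"

definition beval :: "(nat \<times> nat \<Rightarrow> real) \<Rightarrow> real \<Rightarrow> real \<Rightarrow> real" where
  "beval c x y = (\<Sum>m\<in>bsupp c. c m * x ^ fst m * y ^ snd m)"

definition btotal_degree :: "(nat \<times> nat \<Rightarrow> real) \<Rightarrow> nat" where
  "btotal_degree c = Max ((\<lambda>m. fst m + snd m) ` bsupp c)"

definition N :: "(nat \<times> nat \<Rightarrow> real) \<Rightarrow> nat" where
  "N c = card (bsupp c)"

definition H2 :: "nat \<Rightarrow> (nat \<times> nat \<Rightarrow> real) \<Rightarrow> bool" where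
  "H2 d c \<longleftrightarrow> is_bipoly c \<and> bsupp c \<noteq> {} \<and> btotal_degree c = d
     \<and> (\<forall>m. c m \<ge> 0) \<and> (\<forall>x y. x + y = 1 \<longrightarrow> beval c x y = 1)"

end

theory Submission
  imports Defs "HOL-Computational_Algebra.Polynomial"
begin

lemma beval_split:
  fixes c :: "nat \<times> nat \<Rightarrow> real"
  assumes fin: "finite (bsupp c)" and M: "\<forall>m\<in>bsupp c. fst m < M"
    and z: "\<forall>i j. j \<ge> 2 \<longrightarrow> c (i, j) = 0"
  shows "beval c x y = (\<Sum>i<M. c (i,0) * x^i) + y * (\<Sum>i<M. c (i,1) * x^i)"
proof -
  have sub: "bsupp c \<subseteq> {..<M} \<times> {..<2}"
  proof
    fix m assume m: "m \<in> bsupp c"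
    then have "fst m < M" using M by auto
    moreover have "snd m < 2"
    proof (rule ccontr)
      assume "\<not> snd m < 2"
      then have "c (fst m, snd m) = 0" using z by (cases m) auto
      then show False using m by (simp add: bsupp_def)
    qed
    ultimately show "m \<in> {..<M} \<times> {..<2}" by (cases m) auto
  qed
  have "beval c x y = (\<Sum>m\<in>{..<M} \<times> {..<2}. c m * x ^ fst m * y ^ snd m)"
    unfolding beval_def
    by (rule sum.mono_neutral_left) (use sub in \<open>auto simp: bsupp_def\<close>)
  also have "\<dots> = (\<Sum>i<M. \<Sum>j<2. c (i,j) * x ^ i * y ^ j)"
    by (simp add: sum.cartesian_product case_prod_beta')
  also have "\<dots> = (\<Sum>i<M. c (i,0) * x^i + y * (c (i,1) * x^i))"
    by (simp add: numeral_2_eq_2 algebra_simps)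
  also have "\<dots> = (\<Sum>i<M. c (i,0) * x^i) + y * (\<Sum>i<M. c (i,1) * x^i)"
    by (simp add: sum.distrib sum_distrib_left)
  finally show ?thesis .
qed

lemma coeff_rel:
  fixes c :: "nat \<times> nat \<Rightarrow> real"
  assumes fin: "finite (bsupp c)"
    and z: "\<forall>i j. j \<ge> 2 \<longrightarrow> c (i, j) = 0"
    and ev: "\<forall>x y. x + y = 1 \<longrightarrow> beval c x y = 1"
  shows "c (0,0) + c (0,1) = 1 \<and> (\<forall>k. c (Suc k, 0) + c (Suc k, 1) = c (k, 1))"
proof -
  have "finite (fst ` bsupp c)" using fin by simp
  then obtain M where M0: "\<forall>i\<in>fst ` bsupp c. i < M"
    using finite_nat_set_iff_bounded by blast
  then have M: "\<forall>m\<in>bsupp c. fst m < M" by auto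
  have cz: "c (i, j) = 0" if "i \<ge> M" for i j
  proof (rule ccontr)
    assume "c (i,j) \<noteq> 0"
    then have "(i,j) \<in> bsupp c" by (simp add: bsupp_def)
    then show False using M that by force
  qed
  define pa where "pa = (\<Sum>i<M. monom (c (i,0)) i)"
  define pb where "pb = (\<Sum>i<M. monom (c (i,1)) i)"
  have ca: "coeff pa k = c (k,0)" for k
    unfolding pa_def by (auto simp: coeff_sum coeff_monom cz)
  have cb: "coeff pb k = c (k,1)" for k
    unfolding pb_def by (auto simp: coeff_sum coeff_monom cz)
  define Q where "Q = pa + pb - pCons 0 pb - 1"
  have "poly Q x = 0" for x
  proof -
    have "beval c x (1 - x) = 1" using ev by auto
    then show ?thesis
      unfolding Q_def pa_def pb_def
      by (simp add: beval_split[OF fin M z] poly_sum poly_monom algebra_simps)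
  qed
  then have Q0: "Q = 0" using poly_all_0_iff_0 by blast
  have "coeff Q 0 = 0" using Q0 by simp
  then have 1: "c (0,0) + c (0,1) = 1" unfolding Q_def by (simp add: ca cb)
  have "coeff Q (Suc k) = 0" for k using Q0 by simp
  then have 2: "c (Suc k, 0) + c (Suc k, 1) = c (k, 1)" for k
    unfolding Q_def by (simp add: ca cb)
  show ?thesis using 1 2 by auto
qed

theorem lemma7:
  fixes d :: nat and c :: "nat \<times> nat \<Rightarrow> real"
  assumes "H2 d c"
    and "\<forall>i j. j \<ge> 2 \<longrightarrow> c (i, j) = 0"
  shows "N c \<ge> d + 1
    \<and> c (d, 0) \<noteq> 0
    \<and> (\<forall>j. j < d \<longrightarrow> c (j, 1) \<noteq> 0)
    \<and> (N c = d + 1 \<longleftrightarrow>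
         c = (\<lambda>(i, j). if (i = d \<and> j = 0) \<or> (i < d \<and> j = 1) then 1 else 0))"
proof -
  note H = assms(1)[unfolded H2_def]
  have fin: "finite (bsupp c)" using H by (simp add: is_bipoly_def)
  have nn: "\<And>m. c m \<ge> 0" using H by auto
  have z: "\<forall>i j. j \<ge> 2 \<longrightarrow> c (i, j) = 0" by fact
  have ev: "\<forall>x y. x + y = 1 \<longrightarrow> beval c x y = 1" using H by auto
  define a where "a k = c (k,0)" for k
  define b where "b k = c (k,1)" for k
  have r0: "a 0 + b 0 = 1" and rS: "\<And>k. a (Suc k) + b (Suc k) = b k"
    using coeff_rel[OF fin z ev] by (auto simp: a_def b_def)
  have an: "a k \<ge> 0" for k using nn by (simp add: a_def)
  have bn: "b k \<ge> 0" for k using nn by (simp add: b_def)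
  have bdec: "b k \<le> b j" if "j \<le> k" for j k
    using that
  proof (induction k)
    case 0 then show ?case by simp
  next
    case (Suc k)
    show ?case
    proof (cases "j = Suc k")
      case False
      then have "b k \<le> b j" using Suc by simp
      moreover have "b (Suc k) \<le> b k" using rS[of k] an[of "Suc k"] by linarith
      ultimately show ?thesis by linarith
    qed simp
  qed
  have "finite (fst ` bsupp c)" using fin by simp
  then obtain M where M0: "\<forall>i\<in>fst ` bsupp c. i < M"
    using finite_nat_set_iff_bounded by blast
  have "b M = 0"
  proof (rule ccontr)
    assume "b M \<noteq> 0"
    then have "(M,1) \<in> bsupp c" by (simp add: b_def bsupp_def)
    then show False using M0 by force
  qed
  then have exz: "\<exists>k. b k = 0" by blast
  define D where "D = (LEAST k. b k = 0)"
  have bD: "b D = 0" unfolding D_def by (rule LeastI_ex[OF exz])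
  have bpos: "b k > 0" if "k < D" for k
  proof -
    have "b k \<noteq> 0" using not_less_Least[OF that[unfolded D_def]] by simp
    then show ?thesis using bn[of k] by linarith
  qed
  have bz: "b k = 0" if "k \<ge> D" for k using bdec[OF that] bD bn[of k] by linarith
  have az: "a k = 0" if kD: "k > D" for k
  proof -
    obtain m where m: "k = Suc m" "m \<ge> D" using kD by (cases k) auto
    show ?thesis using rS[of m] bz[of m] bz[of k] m by simp
  qed
  have aD: "a D > 0"
  proof (cases D)
    case 0 then show ?thesis using r0 bD by simp
  next
    case (Suc m)
    then show ?thesis using rS[of m] bD bpos[of m] by simp
  qed
  have supp_le: "fst m + snd m \<le> D" if "m \<in> bsupp c" for m
  proof -
    obtain i j where m: "m = (i,j)" by (cases m)
    have cne: "c (i,j) \<noteq> 0" using that m by (simp add: bsupp_def)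
    consider "j = 0" | "j = 1" | "j \<ge> 2" by linarith
    then show ?thesis
    proof cases
      case 1 then show ?thesis using cne az[of i] m by (force simp: a_def)
    next
      case 2 then show ?thesis using cne bz[of i] m by (force simp: b_def)
    next
      case 3 then show ?thesis using cne z by auto
    qed
  qed
  have Dmem: "(D,0) \<in> bsupp c" using aD by (simp add: bsupp_def a_def)
  have dD: "d = D"
  proof -
    have "btotal_degree c = D" unfolding btotal_degree_def
      by (rule Max_eqI) (use fin supp_le Dmem in force)+
    then show ?thesis using H by simp
  qed
  define T where "T = insert (d,0) ((\<lambda>i. (i,1::nat)) ` {..<d})"
  have cardT: "card T = d + 1"
    unfolding T_def by (subst card_insert_disjoint) (auto simp: card_image inj_on_def)
  have finT: "finite T" unfolding T_def by simp
  have TS: "T \<subseteq> bsupp c"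
    using Dmem bpos dD by (force simp: T_def bsupp_def b_def)
  have Nge: "N c \<ge> d + 1"
    using card_mono[OF fin TS] cardT by (simp add: N_def)
  have c1: "c (d,0) \<noteq> 0" using aD dD by (simp add: a_def)
  have c2: "\<forall>j. j < d \<longrightarrow> c (j, 1) \<noteq> 0"
  proof (intro allI impI)
    fix j assume "j < d"
    then have "b j > 0" using bpos dD by simp
    then show "c (j, 1) \<noteq> 0" unfolding b_def by linarith
  qed
  define f :: "nat \<times> nat \<Rightarrow> real" where
    "f = (\<lambda>(i, j). if (i = d \<and> j = 0) \<or> (i < d \<and> j = 1) then 1 else 0)"
  have iff: "N c = d + 1 \<longleftrightarrow> c = f"
  proof
    assume "c = f"
    then have "bsupp c = T" by (auto simp: bsupp_def f_def T_def split: if_splits)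
    then show "N c = d + 1" using cardT by (simp add: N_def)
  next
    assume "N c = d + 1"
    then have eq: "T = bsupp c"
      using card_subset_eq[OF fin TS] cardT by (simp add: N_def)
    have a0: "a i = 0" if "i \<noteq> d" for i
    proof (rule ccontr)
      assume "a i \<noteq> 0"
      then have "(i,0) \<in> bsupp c" by (simp add: bsupp_def a_def)
      then show False using eq that by (auto simp: T_def)
    qed
    have b1: "b k = 1" if "k < d" for k
      using that
    proof (induction k)
      case 0 then show ?case using r0 a0[of 0] by simp
    next
      case (Suc k) then show ?case using rS[of k] a0[of "Suc k"] by simp
    qed
    have ad: "a d = 1"
    proof (cases d)
      case 0 then show ?thesis using r0 bD dD by simp
    next
      case (Suc m) then show ?thesis using rS[of m] bD dD b1[of m] by simp
    qed
    show "c = f"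
    proof
      fix m :: "nat \<times> nat"
      obtain i j where m: "m = (i,j)" by (cases m)
      consider "j = 0" | "j = 1" | "j \<ge> 2" by linarith
      then show "c m = f m"
      proof cases
        case 1 then show ?thesis using a0[of i] ad m by (auto simp: f_def a_def)
      next
        case 2 then show ?thesis using b1[of i] bz[of i] dD m by (auto simp: f_def b_def)
      next
        case 3 then show ?thesis using z m by (auto simp: f_def)
      qed
    qed
  qed
  show ?thesis using Nge c1 c2 iff by (simp add: f_def)
qed

end
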